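(* Let $G$ be a finite group of odd order. (1) If $G'\cong C_{15}$, then $G'\subseteq Z(G)$. (2) If $G'\cong C_{21}$ and $G'\not\subseteq Z(G)$, then $|G/C_G(G')|=|G'\cap Z(G)|=3$, and exactly one of the following holds: (i) $|\mathrm{Cl}_G(x)|=21$ for all $x\in G\setminus C_G(G')$; (ii) there is a subset $X\subseteq G\setminus C_G(G')$ with $|X|=2|Z(C_G(G'))|$ such that $|\mathrm{Cl}_G(x)|=7$ for $x\in X$ and $|\mathrm{Cl}_G(x)|=21$ for $x\in G\setminus (C_G(G')\cup X)$.
   Context: $G'$ is the commutator subgroup, $Z(\cdot)$ the center, $C_G(G')$ the centralizer of $G'$ in $G$, $\mathrm{Cl}_G(x)$ the conjugacy class of $x$, and $C_n$ the cyclic group of order $n$. *)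

theory Defs
  imports "HOL-Algebra.Algebra"
begin

definition center :: "('a, 'b) monoid_scheme \<Rightarrow> 'a set" where
  "center G = {z \<in> carrier G. \<forall>g \<in> carrier G. z \<otimes>\<^bsub>G\<^esub> g = g \<otimes>\<^bsub>G\<^esub> z}"

definition centralizer :: "('a, 'b) monoid_scheme \<Rightarrow> 'a set \<Rightarrow> 'a set" where
  "centralizer G H = {g \<in> carrier G. \<forall>h \<in> H. g \<otimes>\<^bsub>G\<^esub> h = h \<otimes>\<^bsub>G\<^esub> g}"

definition conj_class :: "('a, 'b) monoid_scheme \<Rightarrow> 'a \<Rightarrow> 'a set" where
  "conj_class G x = {g \<otimes>\<^bsub>G\<^esub> x \<otimes>\<^bsub>G\<^esub> inv\<^bsub>G\<^esub> g | g. g \<in> carrier G}"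

abbreviation commutator_subgroup :: "('a, 'b) monoid_scheme \<Rightarrow> 'a set" where
  "commutator_subgroup G \<equiv> derived G (carrier G)"

end

theory Submission
  imports Defs
begin


definition cj :: "('a, 'b) monoid_scheme \<Rightarrow> 'a \<Rightarrow> 'a \<Rightarrow> 'a" where
  "cj G h y = h \<otimes>\<^bsub>G\<^esub> y \<otimes>\<^bsub>G\<^esub> inv\<^bsub>G\<^esub> h"
definition cm :: "('a, 'b) monoid_scheme \<Rightarrow> 'a \<Rightarrow> 'a \<Rightarrow> 'a" where
  "cm G h x = h \<otimes>\<^bsub>G\<^esub> x \<otimes>\<^bsub>G\<^esub> inv\<^bsub>G\<^esub> h \<otimes>\<^bsub>G\<^esub> inv\<^bsub>G\<^esub> x"

context group begin

lemma inv_cancel1: "a \<in> carrier G \<Longrightarrow> b \<in> carrier G \<Longrightarrow> inv a \<otimes> (a \<otimes> b) = b"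
  by (simp add: m_assoc[symmetric])
lemma inv_cancel2: "a \<in> carrier G \<Longrightarrow> b \<in> carrier G \<Longrightarrow> a \<otimes> (inv a \<otimes> b) = b"
  by (simp add: m_assoc[symmetric])

lemmas gsimps = m_assoc inv_cancel1 inv_cancel2 inv_mult_group

lemma cj_closed[simp]: "h \<in> carrier G \<Longrightarrow> y \<in> carrier G \<Longrightarrow> cj G h y \<in> carrier G"
  by (simp add: cj_def)
lemma cm_closed[simp]: "h \<in> carrier G \<Longrightarrow> y \<in> carrier G \<Longrightarrow> cm G h y \<in> carrier G"
  by (simp add: cm_def)
lemma cj_mult: "h \<in> carrier G \<Longrightarrow> a \<in> carrier G \<Longrightarrow> b \<in> carrier G \<Longrightarrow>
   cj G h (a \<otimes> b) = cj G h a \<otimes> cj G h b"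
  by (simp add: cj_def gsimps)
lemma cj_hom: "h \<in> carrier G \<Longrightarrow> cj G h \<in> hom G G"
  by (auto simp: hom_def cj_mult)
lemma cj_int_pow: "h \<in> carrier G \<Longrightarrow> x \<in> carrier G \<Longrightarrow> cj G h (x [^] (i::int)) = (cj G h x) [^] i"
  using hom_int_pow[OF cj_hom] is_group by blast
lemma cj_cj: "a \<in> carrier G \<Longrightarrow> b \<in> carrier G \<Longrightarrow> y \<in> carrier G \<Longrightarrow> cj G (a \<otimes> b) y = cj G a (cj G b y)"
  by (simp add: cj_def gsimps)
lemma cj_inv: "h \<in> carrier G \<Longrightarrow> y \<in> carrier G \<Longrightarrow> cj G h (inv y) = inv (cj G h y)"
  by (simp add: cj_def gsimps)
lemma cj_eq: "h \<in> carrier G \<Longrightarrow> x \<in> carrier G \<Longrightarrow> cj G h x = cm G h x \<otimes> x"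
  by (simp add: cj_def cm_def gsimps)
lemma cm_eq: "h \<in> carrier G \<Longrightarrow> x \<in> carrier G \<Longrightarrow> cm G h x = cj G h x \<otimes> inv x"
  by (simp add: cj_def cm_def gsimps)
lemma cm_mult_left: "a \<in> carrier G \<Longrightarrow> b \<in> carrier G \<Longrightarrow> x \<in> carrier G \<Longrightarrow>
   cm G (a \<otimes> b) x = cj G a (cm G b x) \<otimes> cm G a x"
  by (simp add: cj_def cm_def gsimps)
lemma cm_mult_right: "h \<in> carrier G \<Longrightarrow> x \<in> carrier G \<Longrightarrow> y \<in> carrier G \<Longrightarrow>
   cm G h (x \<otimes> y) = cm G h x \<otimes> cj G x (cm G h y)"
  by (simp add: cj_def cm_def gsimps)
lemma cm_swap: "b \<in> carrier G \<Longrightarrow> x \<in> carrier G \<Longrightarrow> cm G b x = inv (cm G x b)"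
  by (simp add: cm_def gsimps)
lemma cm_inv_right: "h \<in> carrier G \<Longrightarrow> p \<in> carrier G \<Longrightarrow> cm G h (inv p) = cj G (inv p) (inv (cm G h p))"
  by (simp add: cj_def cm_def gsimps)
lemma cm_one_left: "x \<in> carrier G \<Longrightarrow> cm G \<one> x = \<one>"
  by (simp add: cm_def)
lemma cm_comm: "h \<in> carrier G \<Longrightarrow> x \<in> carrier G \<Longrightarrow> (cm G h x = \<one>) = (h \<otimes> x = x \<otimes> h)"
  unfolding cm_def
  by (metis inv_closed inv_solve_right l_one m_closed r_inv m_assoc)
lemma cj_comm: "h \<in> carrier G \<Longrightarrow> y \<in> carrier G \<Longrightarrow> h \<otimes> y = y \<otimes> h \<Longrightarrow> cj G h y = y"
  unfolding cj_def by (simp add: m_assoc)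
lemma cj_one_iff: "h \<in> carrier G \<Longrightarrow> y \<in> carrier G \<Longrightarrow> (cj G h y = y) = (h \<otimes> y = y \<otimes> h)"
  unfolding cj_def by (metis inv_closed inv_solve_right m_closed)
lemma cj_cm: "h \<in> carrier G \<Longrightarrow> a \<in> carrier G \<Longrightarrow> b \<in> carrier G \<Longrightarrow>
   cj G h (cm G a b) = cm G (cj G h a) (cj G h b)"
  by (simp add: cm_def cj_mult cj_inv)
lemma cm_u: "u \<in> carrier G \<Longrightarrow> x \<in> carrier G \<Longrightarrow> cm G u x = u \<otimes> cj G x (inv u)"
  by (simp add: cm_def cj_def m_assoc)

lemma conj_class_img: assumes x: "x \<in> carrier G" shows
  "conj_class G x = (\<lambda>t. t \<otimes> x) ` {cm G h x | h. h \<in> carrier G}"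
proof -
  have E: "h \<otimes> x \<otimes> inv h = cm G h x \<otimes> x" if "h \<in> carrier G" for h
    using cj_eq[OF that x] by (simp add: cj_def)
  have 1: "conj_class G x \<subseteq> (\<lambda>t. t \<otimes> x) ` {cm G h x | h. h \<in> carrier G}"
  proof
    fix y assume "y \<in> conj_class G x"
    then obtain h where h: "h \<in> carrier G" "y = h \<otimes> x \<otimes> inv h" unfolding conj_class_def by blast
    then have "y = cm G h x \<otimes> x" using E by simp
    then show "y \<in> (\<lambda>t. t \<otimes> x) ` {cm G h x | h. h \<in> carrier G}" using h(1) by blast
  qed
  have 2: "(\<lambda>t. t \<otimes> x) ` {cm G h x | h. h \<in> carrier G} \<subseteq> conj_class G x"
  proof
    fix y assume "y \<in> (\<lambda>t. t \<otimes> x) ` {cm G h x | h. h \<in> carrier G}"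
    then obtain h where h: "h \<in> carrier G" "y = cm G h x \<otimes> x" by blast
    then have "y = h \<otimes> x \<otimes> inv h" using E by simp
    then show "y \<in> conj_class G x" using h(1) unfolding conj_class_def by blast
  qed
  from 1 2 show ?thesis by (rule equalityI)
qed

lemma card_conj_class: assumes x: "x \<in> carrier G" shows
  "card (conj_class G x) = card {cm G h x | h. h \<in> carrier G}"
proof -
  have "inj_on (\<lambda>t. t \<otimes> x) (carrier G)" using x by (auto intro!: inj_onI)
  moreover have "{cm G h x | h. h \<in> carrier G} \<subseteq> carrier G" using x by auto
  ultimately have "inj_on (\<lambda>t. t \<otimes> x) {cm G h x | h. h \<in> carrier G}" by (rule inj_on_subset)
  then show ?thesis unfolding conj_class_img[OF x] by (rule card_image)
qed
end


lemma (in group) cyc_gen: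
  assumes D: "subgroup D G" and iso: "G\<lparr>carrier := D\<rparr> \<cong> integer_mod_group n" and n: "n > 1"
  shows "\<exists>g\<in>D. D = range (\<lambda>i::int. g [^] i) \<and> (\<forall>i j::int. g [^] i = g [^] j \<longleftrightarrow> i mod int n = j mod int n)"
proof -
  have grpD: "group (G\<lparr>carrier := D\<rparr>)" using D subgroup_imp_group is_group by blast
  have "integer_mod_group n \<cong> G\<lparr>carrier := D\<rparr>" using group.iso_sym[OF grpD iso] .
  then obtain \<psi> where psi: "\<psi> \<in> iso (integer_mod_group n) (G\<lparr>carrier := D\<rparr>)" unfolding is_iso_def by blast
  have hom: "\<psi> \<in> hom (integer_mod_group n) (G\<lparr>carrier := D\<rparr>)" using psi by (simp add: iso_def)
  have bij: "bij_betw \<psi> {0..<int n} D" using psi n by (simp add: iso_def carrier_integer_mod_group)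
  have one: "(1::int) \<in> carrier (integer_mod_group n)" using n by simp
  define g where "g = \<psi> 1"
  have gD: "g \<in> D" using hom one unfolding g_def hom_def by (auto simp: Pi_def)
  have key: "g [^] i = \<psi> (i mod n)" for i :: int
  proof -
    have "\<psi> (pow (integer_mod_group n) 1 i) = pow (G\<lparr>carrier := D\<rparr>) (\<psi> 1) i"
      using hom_int_pow[OF hom one group_integer_mod_group grpD] .
    moreover have "pow (integer_mod_group n) (1::int) i = i mod n"
      by (simp add: int_pow_integer_mod_group)
    moreover have "pow (G\<lparr>carrier := D\<rparr>) g i = g [^] i"
      using int_pow_consistent[OF D gD] by simp
    ultimately show ?thesis unfolding g_def by simp
  qed
  have X: "D = range (\<lambda>i::int. g [^] i)"
  proof
    show "D \<subseteq> range (\<lambda>i::int. g [^] i)"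
    proof
      fix d assume "d \<in> D"
      then obtain i where i: "i \<in> {0..<int n}" "d = \<psi> i" using bij by (auto simp: bij_betw_def)
      then have "i mod n = i" by simp
      then show "d \<in> range (\<lambda>i::int. g [^] i)" using key i by (metis rangeI)
    qed
    show "range (\<lambda>i::int. g [^] i) \<subseteq> D"
      using key bij n by (auto simp: bij_betw_def)
  qed
  have Y0: "g [^] i = g [^] j \<longleftrightarrow> i mod n = j mod n" for i j :: int
  proof -
    have "i mod n \<in> {0..<int n}" "j mod n \<in> {0..<int n}" using n by auto
    moreover have "inj_on \<psi> {0..<int n}" using bij by (simp add: bij_betw_def)
    ultimately have "\<psi> (i mod n) = \<psi> (j mod n) \<longleftrightarrow> i mod n = j mod n" by (auto dest: inj_onD)
    then show ?thesis using key by simp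
  qed
  have Y: "\<forall>i j::int. g [^] i = g [^] j \<longleftrightarrow> i mod int n = j mod int n" using Y0 by blast
  show ?thesis
  proof (rule bexI[where x=g])
    show "D = range (\<lambda>i::int. g [^] i) \<and> (\<forall>i j::int. g [^] i = g [^] j \<longleftrightarrow> i mod int n = j mod int n)"
      using X Y by (rule conjI)
    show "g \<in> D" by (rule gD)
  qed
qed

lemma pow_mod6: assumes "(r::int)^6 mod 21 = 1" shows "r^m mod 21 = r^(m mod 6) mod 21"
proof -
  have eq: "r^m = (r^6)^(m div 6) * r^(m mod 6)"
    by (simp add: power_add[symmetric] power_mult[symmetric])
  have one: "(r^6)^(m div 6) mod 21 = 1"
  proof -
    have "(r^6)^(m div 6) mod 21 = ((r^6) mod 21)^(m div 6) mod 21" by (simp add: power_mod)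
    also have "\<dots> = 1" using assms by simp
    finally show ?thesis .
  qed
  have "r^m mod 21 = ((r^6)^(m div 6) * r^(m mod 6)) mod 21" using eq by simp
  also have "\<dots> = (((r^6)^(m div 6) mod 21) * r^(m mod 6)) mod 21" by (simp add: mod_mult_left_eq)
  also have "\<dots> = r^(m mod 6) mod 21" using one by simp
  finally show ?thesis .
qed

lemma pow_mod4: assumes "(r::int)^4 mod 15 = 1" shows "r^m mod 15 = r^(m mod 4) mod 15"
proof -
  have eq: "r^m = (r^4)^(m div 4) * r^(m mod 4)"
    by (simp add: power_add[symmetric] power_mult[symmetric])
  have one: "(r^4)^(m div 4) mod 15 = 1"
  proof -
    have "(r^4)^(m div 4) mod 15 = ((r^4) mod 15)^(m div 4) mod 15" by (simp add: power_mod)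
    also have "\<dots> = 1" using assms by simp
    finally show ?thesis .
  qed
  have "r^m mod 15 = ((r^4)^(m div 4) * r^(m mod 4)) mod 15" using eq by simp
  also have "\<dots> = (((r^4)^(m div 4) mod 15) * r^(m mod 4)) mod 15" by (simp add: mod_mult_left_eq)
  also have "\<dots> = r^(m mod 4) mod 15" using one by simp
  finally show ?thesis .
qed

lemma int21_cases: "0 \<le> (r::int) \<Longrightarrow> r < 21 \<Longrightarrow> r = 0 \<or> r = 1 \<or> r = 2 \<or> r = 3 \<or> r = 4 \<or> r = 5 \<or> r = 6 \<or> r = 7 \<or> r = 8 \<or> r = 9 \<or> r = 10 \<or> r = 11 \<or> r = 12 \<or> r = 13 \<or> r = 14 \<or> r = 15 \<or> r = 16 \<or> r = 17 \<or> r = 18 \<or> r = 19 \<or> r = 20"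
  by presburger

lemma nt21: assumes "odd m" "(k::int)^m mod 21 = 1" shows "k mod 21 \<in> {1,4,16}"
proof -
  define r where "r = k mod 21"
  have r: "0 \<le> r" "r < 21" unfolding r_def by auto
  have rm: "r^m mod 21 = 1" using assms(2) unfolding r_def by (simp add: power_mod)
  have m0: "m > 0" using assms(1) by (cases m) auto
  have n3: "\<not> 3 dvd r"
  proof
    assume "3 dvd r" then have "3 dvd r^m" using m0 by (meson dvd_power dvd_trans)
    then have "3 dvd r^m mod 21" by (simp add: dvd_mod)
    then show False using rm by simp
  qed
  have n7: "\<not> 7 dvd r"
  proof
    assume "7 dvd r" then have "7 dvd r^m" using m0 by (meson dvd_power dvd_trans)
    then have "7 dvd r^m mod 21" by (simp add: dvd_mod)
    then show False using rm by simp
  qed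
  have r6: "r^6 mod 21 = 1" using int21_cases[OF r] n3 n7 by (elim disjE) simp_all
  have "m mod 6 = 1 \<or> m mod 6 = 3 \<or> m mod 6 = 5" using assms(1) unfolding even_iff_mod_2_eq_zero by presburger
  then have "r^1 mod 21 = 1 \<or> r^3 mod 21 = 1 \<or> r^5 mod 21 = 1" using rm pow_mod6[OF r6, of m] by auto
  then have "r \<in> {1,4,16}" using int21_cases[OF r] n3 n7 by (elim disjE) simp_all
  then show ?thesis unfolding r_def .
qed

lemma int15_cases: "0 \<le> (r::int) \<Longrightarrow> r < 15 \<Longrightarrow> r = 0 \<or> r = 1 \<or> r = 2 \<or> r = 3 \<or> r = 4 \<or> r = 5 \<or> r = 6 \<or> r = 7 \<or> r = 8 \<or> r = 9 \<or> r = 10 \<or> r = 11 \<or> r = 12 \<or> r = 13 \<or> r = 14"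
  by presburger

lemma nt15: assumes "odd m" "(k::int)^m mod 15 = 1" shows "k mod 15 = 1"
proof -
  define r where "r = k mod 15"
  have r: "0 \<le> r" "r < 15" unfolding r_def by auto
  have rm: "r^m mod 15 = 1" using assms(2) unfolding r_def by (simp add: power_mod)
  have m0: "m > 0" using assms(1) by (cases m) auto
  have n3: "\<not> 3 dvd r"
  proof
    assume "3 dvd r" then have "3 dvd r^m" using m0 by (meson dvd_power dvd_trans)
    then have "3 dvd r^m mod 15" by (simp add: dvd_mod)
    then show False using rm by simp
  qed
  have n5: "\<not> 5 dvd r"
  proof
    assume "5 dvd r" then have "5 dvd r^m" using m0 by (meson dvd_power dvd_trans)
    then have "5 dvd r^m mod 15" by (simp add: dvd_mod)
    then show False using rm by simp
  qed
  have r4: "r^4 mod 15 = 1" using int15_cases[OF r] n3 n5 by (elim disjE) simp_all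
  have "m mod 4 = 1 \<or> m mod 4 = 3" using assms(1) unfolding even_iff_mod_2_eq_zero by presburger
  then have "r^1 mod 15 = 1 \<or> r^3 mod 15 = 1" using rm pow_mod4[OF r4, of m] by auto
  then have "r = 1" using int15_cases[OF r] n3 n5 by (elim disjE) simp_all
  then show ?thesis unfolding r_def .
qed

lemma mod21_7: assumes k: "(k::int) = 4 \<or> k = 16" and e: "(k * i) mod 21 = i mod 21" shows "7 dvd i"
proof -
  have "21 dvd (k * i - i)" using e by (simp add: mod_eq_dvd_iff)
  then have d: "7 dvd (k * i - i)" by (rule dvd_trans[rotated]) simp
  from k show ?thesis
  proof
    assume "k = 4"
    then have "7 dvd 3 * i" using d by simp
    then have "7 dvd 5 * (3 * i)" by (rule dvd_mult)
    then have "7 dvd 15 * i" by simp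
    then have "7 dvd 15 * i - 7 * (2 * i)" by (intro dvd_diff) simp_all
    then show ?thesis by simp
  next
    assume "k = 16"
    then have "7 dvd 15 * i" using d by simp
    then have "7 dvd 15 * i - 7 * (2 * i)" by (intro dvd_diff) simp_all
    then show ?thesis by simp
  qed
qed
lemma mod21_7c: assumes i: "7 dvd (i::int)" and k: "k = 1 \<or> k = 4 \<or> k = (16::int)" shows "(k * i) mod 21 = i mod 21"
proof -
  obtain t where t: "i = 7 * t" using i by blast
  have "21 dvd (k * i - i)"
  proof -
    have "k * i - i = 21 * ((k - 1) div 3 * t)" using k t by auto
    then show ?thesis by simp
  qed
  then show ?thesis by (simp add: mod_eq_dvd_iff)
qed
lemma mod21_l7: "(7 * (t::int)) mod 21 = 7 * (t mod 3)"
proof -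
  have "7 * (t mod 3) = (7*t) mod (7*3)" by (rule mult_mod_right)
  then show ?thesis by simp
qed

lemma mod21_l3: "(3 * (t::int)) mod 21 = 3 * (t mod 7)"
proof -
  have "3 * (t mod 7) = (3*t) mod (3*7)" by (rule mult_mod_right)
  then show ?thesis by simp
qed

lemma seven_dvd: "7 dvd (3 * (t::int)) \<Longrightarrow> 7 dvd t"
proof -
  assume "7 dvd 3 * t"
  then have "7 dvd 5 * (3 * t)" by (rule dvd_mult)
  then have "7 dvd 15 * t" by simp
  then have "7 dvd 15 * t - 7 * (2 * t)" by (intro dvd_diff) simp_all
  then show ?thesis by simp
qed

lemma exc: assumes "a \<in> {1,4,16}" "b \<in> {4,16}" shows "\<exists>c::int. (a * c * (1 - b)) mod 21 = 3"
proof -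
  have "a = 1 \<and> b = 4 \<or> a = 4 \<and> b = 4 \<or> a = 16 \<and> b = 4 \<or> a = 1 \<and> b = 16 \<or> a = 4 \<and> b = 16 \<or> a = 16 \<and> b = 16"
    using assms by auto
  then show ?thesis
  proof (elim disjE conjE)
    assume "a = 1" "b = 4" then show ?thesis by (intro exI[of _ "-1"]) simp
  next
    assume "a = 4" "b = 4" then show ?thesis by (intro exI[of _ 5]) simp
  next
    assume "a = 16" "b = 4" then show ?thesis by (intro exI[of _ 3]) simp
  next
    assume "a = 1" "b = 16" then show ?thesis by (intro exI[of _ 4]) simp
  next
    assume "a = 4" "b = 16" then show ?thesis by (intro exI[of _ 1]) simp
  next
    assume "a = 16" "b = 16" then show ?thesis by (intro exI[of _ 2]) simp
  qed
qed



lemma (in group) conj_pow_exp: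
  assumes h: "h \<in> carrier G" and g: "g \<in> carrier G" and k: "cj G h g = g [^] (k::int)"
  shows "cj G (h [^] (m::nat)) g = g [^] (k^m)"
proof (induction m)
  case 0
  then show ?case using g by (simp add: cj_def)
next
  case (Suc m)
  have "cj G (h [^] Suc m) g = cj G (h [^] m) (cj G h g)"
    using h g by (simp add: cj_cj)
  also have "\<dots> = (cj G (h [^] m) g) [^] k" using k h g by (simp add: cj_int_pow)
  also have "\<dots> = g [^] (k^m * k)" using Suc g by (simp add: int_pow_pow)
  finally show ?case by (simp add: mult.commute)
qed

lemma (in group) conj_exp_order:
  assumes h: "h \<in> carrier G" and g: "g \<in> carrier G" and k: "cj G h g = g [^] (k::int)"
  and ord: "\<forall>i j::int. g [^] i = g [^] j \<longleftrightarrow> i mod n = j mod n"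
  shows "k ^ (order G) mod n = 1 mod n"
proof -
  have "cj G (h [^] order G) g = g [^] (k ^ order G)" by (rule conj_pow_exp[OF h g k])
  moreover have "h [^] order G = \<one>" using pow_order_eq_1[OF h] .
  ultimately have "g [^] (1::int) = g [^] (k ^ order G)" using g by (simp add: cj_def)
  then show ?thesis using ord by simp
qed

lemma (in group) cm_in_derived:
  assumes "h \<in> carrier G" "x \<in> carrier G"
  shows "cm G h x \<in> derived G (carrier G)"
  unfolding derived_def cm_def using assms by (intro generate.incl) blast

locale P21 = group G for G (structure) +
  fixes g
  assumes fin: "finite (carrier G)" and oddG: "odd (order G)"
  and gD: "derived G (carrier G) = range (\<lambda>i::int. g [^] i)"
  and gord: "\<forall>i j::int. g [^] i = g [^] j \<longleftrightarrow> i mod 21 = j mod 21"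
  and nc: "\<not> derived G (carrier G) \<subseteq> center G"
  and g_carr[simp]: "g \<in> carrier G"
begin

abbreviation "D \<equiv> derived G (carrier G)"

lemma D_carr: "D \<subseteq> carrier G" by (rule derived_in_carrier) simp

lemma gp_mult: "g [^] (i::int) \<otimes> g [^] (j::int) = g [^] (i + j)"
  by (simp add: int_pow_mult)
lemma gp_inv: "inv (g [^] (i::int)) = g [^] (- i)"
  by (simp add: int_pow_neg)
lemma gp_eq: "g [^] (i::int) = g [^] (j::int) \<longleftrightarrow> i mod 21 = j mod 21"
  using gord by blast
lemma gp_mod: "g [^] (i mod 21) = g [^] (i::int)"
  using gp_eq by simp
lemma gp_one: "g [^] (i::int) = \<one> \<longleftrightarrow> 21 dvd i"
  using gp_eq[of i 0] by (simp add: dvd_eq_mod_eq_0)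
lemma inD: "d \<in> D \<Longrightarrow> \<exists>i::int. d = g [^] i" using gD by auto
lemma gp_D[simp]: "g [^] (i::int) \<in> D" using gD by auto

lemma cm_gp: "h \<in> carrier G \<Longrightarrow> x \<in> carrier G \<Longrightarrow> \<exists>i::int. cm G h x = g [^] i"
  using cm_in_derived inD by blast

lemma cj_exists: "h \<in> carrier G \<Longrightarrow> \<exists>k::int. cj G h g = g [^] k"
proof -
  assume h: "h \<in> carrier G"
  obtain i :: int where i: "cm G h g = g [^] i" using cm_gp[OF h g_carr] by blast
  have "cj G h g = g [^] i \<otimes> g [^] (1::int)" using cj_eq[OF h g_carr] i by simp
  then have "cj G h g = g [^] (i + 1)" using gp_mult[of i 1] by simp
  then show ?thesis by blast
qed

definition kap :: "'a \<Rightarrow> int" where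
  "kap h = (SOME k. k \<in> {1,4,16} \<and> cj G h g = g [^] k)"

lemma kap_prop: assumes h: "h \<in> carrier G" shows "kap h \<in> {1,4,16} \<and> cj G h g = g [^] kap h"
proof -
  obtain k :: int where k: "cj G h g = g [^] k" using cj_exists[OF h] by blast
  have e0: "k ^ order G mod 21 = 1 mod 21" by (rule conj_exp_order[OF h g_carr k gord])
  have e: "k ^ order G mod 21 = 1" using e0 by simp
  have "k mod 21 \<in> {1,4,16}" by (rule nt21[OF oddG e])
  moreover have "cj G h g = g [^] (k mod 21)" unfolding gp_mod by (rule k)
  ultimately have "\<exists>k::int. k \<in> {1,4,16} \<and> cj G h g = g [^] k" by (intro exI[of _ "k mod 21"] conjI)
  then show ?thesis unfolding kap_def by (rule someI_ex)
qed

lemma kap_in: "h \<in> carrier G \<Longrightarrow> kap h \<in> {1,4,16}" using kap_prop by blast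
lemma kap_cj: "h \<in> carrier G \<Longrightarrow> cj G h g = g [^] kap h" using kap_prop by blast

lemma kap_unique: assumes h: "h \<in> carrier G" and k: "k \<in> {1,4,16}" and e: "cj G h g = g [^] k"
  shows "kap h = k"
proof -
  have "g [^] kap h = g [^] k" using kap_cj[OF h] e by simp
  then have "kap h mod 21 = k mod 21" using gp_eq by blast
  then show ?thesis using kap_in[OF h] k by auto
qed

lemma cj_gp: "h \<in> carrier G \<Longrightarrow> cj G h (g [^] (i::int)) = g [^] (kap h * i)"
  by (simp add: cj_int_pow kap_cj int_pow_pow)

lemma kap_mult: assumes a: "a \<in> carrier G" and b: "b \<in> carrier G"
  shows "kap (a \<otimes> b) = (kap a * kap b) mod 21"
proof (rule kap_unique)
  show "a \<otimes> b \<in> carrier G" using a b by simp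
  show "kap a * kap b mod 21 \<in> {1, 4, 16}" using kap_in[OF a] kap_in[OF b] by auto
  have "cj G (a \<otimes> b) g = cj G a (g [^] kap b)" using a b by (simp add: cj_cj kap_cj[OF b])
  also have "\<dots> = g [^] (kap a * kap b)" using a by (simp add: cj_gp)
  finally show "cj G (a \<otimes> b) g = g [^] (kap a * kap b mod 21)" using gp_mod by simp
qed

lemma kap_one: "kap \<one> = 1"
  by (rule kap_unique) (auto simp: cj_def)

lemma kap_inv: assumes h: "h \<in> carrier G" shows "kap (inv h) = (kap h)^2 mod 21"
proof -
  have e: "(kap (inv h) * kap h) mod 21 = 1" using kap_mult[of "inv h" h] h kap_one by simp
  show ?thesis using kap_in[OF h] kap_in[of "inv h"] h e by (auto simp: power2_eq_square)
qed


lemma g_D: "g \<in> D" using gp_D[of 1] by simp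

abbreviation "C \<equiv> centralizer G D"

lemma kap_gp: "kap (g [^] (i::int)) = 1"
proof (rule kap_unique)
  show "g [^] i \<in> carrier G" by simp
  show "(1::int) \<in> {1,4,16}" by simp
  have "g [^] i \<otimes> g = g \<otimes> g [^] i"
    using gp_mult[of i 1] gp_mult[of 1 i] by (simp add: add.commute)
  then show "cj G (g [^] i) g = g [^] (1::int)" by (simp add: cj_comm)
qed

lemma memC: "h \<in> C \<longleftrightarrow> h \<in> carrier G \<and> kap h = 1"
proof
  assume h: "h \<in> C"
  then have hc: "h \<in> carrier G" and "h \<otimes> g = g \<otimes> h" using g_D unfolding centralizer_def by auto
  then have "cj G h g = g [^] (1::int)" by (simp add: cj_comm)
  then have "kap h = 1" by (intro kap_unique[OF hc]) auto
  then show "h \<in> carrier G \<and> kap h = 1" using hc by simp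
next
  assume h: "h \<in> carrier G \<and> kap h = 1"
  have "h \<otimes> d = d \<otimes> h" if d: "d \<in> D" for d
  proof -
    obtain i :: int where i: "d = g [^] i" using inD[OF d] by blast
    have "cj G h d = d" using h i by (simp add: cj_gp)
    then show ?thesis using h i by (simp add: cj_one_iff)
  qed
  then show "h \<in> C" using h unfolding centralizer_def by auto
qed

lemma C_carr: "C \<subseteq> carrier G" using memC by auto

lemma C_subgroup: "subgroup C G"
proof (rule subgroupI)
  show "C \<subseteq> carrier G" by (rule C_carr)
  show "C \<noteq> {}" using memC kap_one by auto
  show "inv a \<in> C" if "a \<in> C" for a using that memC kap_inv by simp
  show "a \<otimes> b \<in> C" if "a \<in> C" "b \<in> C" for a b using that memC kap_mult by simp
qed

lemma D_C: "d \<in> D \<Longrightarrow> d \<in> C" using inD memC kap_gp by fastforce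

lemma C_comm: "c \<in> C \<Longrightarrow> d \<in> D \<Longrightarrow> c \<otimes> d = d \<otimes> c"
  unfolding centralizer_def by auto

lemma kap_sq: "k \<in> {1,4,16} \<Longrightarrow> k' \<in> {1,4,16} \<Longrightarrow> (k * (k'^2 mod 21)) mod 21 = 1 \<longleftrightarrow> k = (k'::int)"
  by (auto simp: power2_eq_square)

lemma coset_eq: assumes x: "x \<in> carrier G" and y: "y \<in> carrier G"
  shows "C #> x = C #> y \<longleftrightarrow> kap x = kap y"
proof
  assume "C #> x = C #> y"
  then have "x \<in> C #> y" using rcos_self[OF x C_subgroup] by simp
  then obtain c where c: "c \<in> C" "x = c \<otimes> y" unfolding r_coset_def by blast
  then have "kap x = (kap c * kap y) mod 21" using y C_carr kap_mult by auto
  then show "kap x = kap y" using c memC kap_in[OF y] by auto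
next
  assume e: "kap x = kap y"
  have "kap (x \<otimes> inv y) = (kap x * (kap y ^ 2 mod 21)) mod 21" using x y kap_mult kap_inv by simp
  also have "\<dots> = 1" using kap_sq[OF kap_in[OF x] kap_in[OF y]] e by simp
  finally have "x \<otimes> inv y \<in> C" using x y memC by simp
  moreover have "x = (x \<otimes> inv y) \<otimes> y" using x y by (simp add: m_assoc)
  ultimately have "x \<in> C #> y" unfolding r_coset_def by blast
  then show "C #> x = C #> y" using repr_independence[OF _ y C_subgroup] by simp
qed

lemma h0_ex: "\<exists>h0 \<in> carrier G. kap h0 \<noteq> 1"
proof -
  obtain d where d: "d \<in> D" "d \<notin> center G" using nc by blast
  then have dc: "d \<in> carrier G" using D_carr by blast
  then obtain h where h: "h \<in> carrier G" "d \<otimes> h \<noteq> h \<otimes> d" using d unfolding center_def by blast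
  have "kap h \<noteq> 1"
  proof
    assume "kap h = 1"
    then have "h \<in> C" using memC h by simp
    then show False using C_comm[OF _ d(1)] h by simp
  qed
  then show ?thesis using h by blast
qed

lemma card_rcosets: "card (rcosets C) = 3"
proof -
  obtain h0 where h0: "h0 \<in> carrier G" "kap h0 \<noteq> 1" using h0_ex by blast
  have k0: "kap h0 = 4 \<or> kap h0 = 16" using kap_in[OF h0(1)] h0(2) by auto
  have k2: "kap (h0 \<otimes> h0) = (kap h0 * kap h0) mod 21" using h0 kap_mult by simp
  have R: "rcosets C = {C #> \<one>, C #> h0, C #> (h0 \<otimes> h0)}"
  proof
    show "rcosets C \<subseteq> {C #> \<one>, C #> h0, C #> (h0 \<otimes> h0)}"
    proof
      fix U assume "U \<in> rcosets C"
      then obtain x where x: "x \<in> carrier G" "U = C #> x" unfolding RCOSETS_def by blast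
      have "kap x = kap \<one> \<or> kap x = kap h0 \<or> kap x = kap (h0 \<otimes> h0)"
        using kap_in[OF x(1)] k0 k2 kap_one by auto
      then have "U = C #> \<one> \<or> U = C #> h0 \<or> U = C #> (h0 \<otimes> h0)"
        using coset_eq[OF x(1)] h0(1) x(2) by (metis one_closed m_closed)
      then show "U \<in> {C #> \<one>, C #> h0, C #> (h0 \<otimes> h0)}" by blast
    qed
    have "C #> \<one> \<in> rcosets C" by (rule rcosetsI[OF C_carr one_closed])
    moreover have "C #> h0 \<in> rcosets C" by (rule rcosetsI[OF C_carr h0(1)])
    moreover have "C #> (h0 \<otimes> h0) \<in> rcosets C" by (rule rcosetsI[OF C_carr m_closed[OF h0(1) h0(1)]])
    ultimately show "{C #> \<one>, C #> h0, C #> (h0 \<otimes> h0)} \<subseteq> rcosets C" by blast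
  qed
  have hh: "h0 \<otimes> h0 \<in> carrier G" using h0 by simp
  have d1: "C #> \<one> \<noteq> C #> h0" unfolding coset_eq[OF one_closed h0(1)] using h0 kap_one by simp
  have d2: "C #> \<one> \<noteq> C #> (h0 \<otimes> h0)" unfolding coset_eq[OF one_closed hh] using k0 k2 kap_one by auto
  have d3: "C #> h0 \<noteq> C #> (h0 \<otimes> h0)" unfolding coset_eq[OF h0(1) hh] using k0 k2 by auto
  have "card {C #> \<one>, C #> h0, C #> (h0 \<otimes> h0)} = 3"
    using d1 d2 d3 by (simp only: card_insert_if finite_insert finite.emptyI insert_iff empty_iff card.empty) simp
  then show ?thesis unfolding R .
qed

lemma gp_center: "g [^] (i::int) \<in> center G \<longleftrightarrow> 7 dvd i"
proof -
  have iff: "g [^] i \<otimes> h = h \<otimes> g [^] i \<longleftrightarrow> (kap h * i) mod 21 = i mod 21" if h: "h \<in> carrier G" for h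
  proof -
    have "g [^] i \<otimes> h = h \<otimes> g [^] i \<longleftrightarrow> cj G h (g [^] i) = g [^] i"
      using cj_one_iff[OF h, of "g [^] i"] by auto
    also have "\<dots> \<longleftrightarrow> (kap h * i) mod 21 = i mod 21" using h by (simp add: cj_gp gp_eq)
    finally show ?thesis .
  qed
  obtain h0 where h0: "h0 \<in> carrier G" "kap h0 \<noteq> 1" using h0_ex by blast
  have k0: "kap h0 = 4 \<or> kap h0 = 16" using kap_in[OF h0(1)] h0(2) by auto
  show ?thesis
  proof
    assume "g [^] i \<in> center G"
    then have "(kap h0 * i) mod 21 = i mod 21" using iff[OF h0(1)] h0 unfolding center_def by auto
    then show "7 dvd i" using k0 mod21_7 by blast
  next
    assume i: "7 dvd i"
    have "(kap h * i) mod 21 = i mod 21" if h: "h \<in> carrier G" for h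
    proof -
      have "kap h = 1 \<or> kap h = 4 \<or> kap h = 16" using kap_in[OF h] by auto
      then show ?thesis using i mod21_7c by blast
    qed
    then show "g [^] i \<in> center G" using iff unfolding center_def by auto
  qed
qed

lemma card_D_center: "card (D \<inter> center G) = 3"
proof -
  have E: "D \<inter> center G = (\<lambda>j::int. g [^] (7 * j)) ` {0..<3}"
  proof
    show "D \<inter> center G \<subseteq> (\<lambda>j::int. g [^] (7 * j)) ` {0..<3}"
    proof
      fix d assume d: "d \<in> D \<inter> center G"
      then obtain i :: int where i: "d = g [^] i" using inD by blast
      have "g [^] i \<in> center G" using d i by simp
      then have "7 dvd i" by (simp only: gp_center)
      then obtain t where t: "i = 7 * t" by blast
      have "(7 * t) mod 21 = (7 * (t mod 3)) mod 21" by (simp only: mod21_l7 mod_mod_trivial)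
      then have "g [^] i = g [^] (7 * (t mod 3))" by (simp only: gp_eq t)
      then have "d = g [^] (7 * (t mod 3))" by (simp only: i)
      moreover have "t mod 3 \<in> {0..<3}" by simp
      ultimately show "d \<in> (\<lambda>j::int. g [^] (7 * j)) ` {0..<3}" by (rule image_eqI)
    qed
    show "(\<lambda>j::int. g [^] (7 * j)) ` {0..<3} \<subseteq> D \<inter> center G"
    proof
      fix d assume "d \<in> (\<lambda>j::int. g [^] (7 * j)) ` {0..<3}"
      then obtain j :: int where j: "d = g [^] (7 * j)" by blast
      have "g [^] (7 * j) \<in> center G" by (simp only: gp_center) simp
      then show "d \<in> D \<inter> center G" using j gp_D by blast
    qed
  qed
  have "inj_on (\<lambda>j::int. g [^] (7 * j)) {0..<3}"
  proof (rule inj_onI)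
    fix a b :: int assume a: "a \<in> {0..<3}" and b: "b \<in> {0..<3}" and e: "g [^] (7 * a) = g [^] (7 * b)"
    have "(7 * a) mod 21 = (7 * b) mod 21" using e by (simp only: gp_eq)
    then have "7 * (a mod 3) = 7 * (b mod 3)" by (simp only: mod21_l7)
    moreover have "a mod 3 = a" "b mod 3 = b" using a b by simp_all
    ultimately show "a = b" by simp
  qed
  then have "card ((\<lambda>j::int. g [^] (7 * j)) ` {0..<3}) = card {0..<3::int}" by (rule card_image)
  then show ?thesis unfolding E by simp
qed


lemma kap_eq_C: assumes x: "x \<in> carrier G" and y: "y \<in> carrier G" and e: "kap x = kap y"
  shows "x \<otimes> inv y \<in> C"
proof -
  have "kap (x \<otimes> inv y) = (kap x * (kap y ^ 2 mod 21)) mod 21" using x y kap_mult kap_inv by simp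
  also have "\<dots> = 1" using kap_sq[OF kap_in[OF x] kap_in[OF y]] e by simp
  finally show ?thesis using x y memC by simp
qed

lemma D_comm: "d1 \<in> D \<Longrightarrow> d2 \<in> D \<Longrightarrow> d1 \<otimes> d2 = d2 \<otimes> d1"
proof -
  assume "d1 \<in> D" "d2 \<in> D"
  then obtain i j :: int where "d1 = g [^] i" "d2 = g [^] j" using inD by blast
  then show ?thesis by (simp add: gp_mult add.commute)
qed

abbreviation "A \<equiv> range (\<lambda>j::int. g [^] (3 * j))"

lemma memA: "g [^] (i::int) \<in> A \<longleftrightarrow> 3 dvd i"
proof
  assume "g [^] i \<in> A"
  then obtain j :: int where "g [^] i = g [^] (3 * j)" by blast
  then have "i mod 21 = (3 * j) mod 21" by (simp only: gp_eq)
  then have "21 dvd i - 3 * j" by (simp only: mod_eq_dvd_iff)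
  then have "3 dvd i - 3 * j" by (rule dvd_trans[rotated]) simp
  then have "3 dvd i - 3 * j + 3 * j" by (intro dvd_add) simp_all
  then show "3 dvd i" by simp
next
  assume "3 dvd i"
  then obtain t where "i = 3 * t" by blast
  then show "g [^] i \<in> A" by blast
qed

lemma A_gp: "a \<in> A \<Longrightarrow> \<exists>j::int. a = g [^] (3 * j)" by blast
lemma A_D: "a \<in> A \<Longrightarrow> a \<in> D" by auto
lemma A_carr: "a \<in> A \<Longrightarrow> a \<in> carrier G" by auto
lemma cj_A: "h \<in> carrier G \<Longrightarrow> a \<in> A \<Longrightarrow> cj G h a \<in> A"
proof -
  assume h: "h \<in> carrier G" and "a \<in> A"
  then obtain j :: int where j: "a = g [^] (3 * j)" by blast
  have "cj G h a = g [^] (3 * (kap h * j))" using h j by (simp add: cj_gp mult.left_commute)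
  then show ?thesis by blast
qed
lemma A_inv: "a \<in> A \<Longrightarrow> inv a \<in> A"
proof -
  assume "a \<in> A"
  then obtain j :: int where j: "a = g [^] (3 * j)" by blast
  have "inv a = g [^] (3 * (- j))" using j by (simp add: gp_inv)
  then show ?thesis by blast
qed
lemma A_mult: "a \<in> A \<Longrightarrow> b \<in> A \<Longrightarrow> a \<otimes> b \<in> A"
proof -
  assume "a \<in> A" "b \<in> A"
  then obtain i j :: int where "a = g [^] (3 * i)" "b = g [^] (3 * j)" by blast
  then have "a \<otimes> b = g [^] (3 * (i + j))" by (simp add: gp_mult distrib_left)
  then show ?thesis by blast
qed
lemma one_A: "\<one> \<in> A"
proof -
  have "\<one> = g [^] (3 * (0::int))" by simp
  then show ?thesis by blast
qed

lemma shift: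
  fixes j :: int
  assumes x: "x \<in> carrier G" and kx: "kap x \<noteq> 1" and h: "h \<in> carrier G"
  shows "\<exists>h'\<in>carrier G. cm G h' x = g [^] (3 * j) \<otimes> cm G h x"
proof -
  have kx2: "kap x \<in> {4,16}" using kap_in[OF x] kx by auto
  obtain c :: int where c: "(kap h * c * (1 - kap x)) mod 21 = 3" using exc[OF kap_in[OF h] kx2] by blast
  define u where "u = g [^] (c * j)"
  have u: "u \<in> carrier G" unfolding u_def by simp
  have "cm G u x = u \<otimes> cj G x (inv u)" using u x by (rule cm_u)
  also have "\<dots> = g [^] (c * j) \<otimes> g [^] (kap x * - (c * j))" unfolding u_def using x by (simp add: gp_inv cj_gp)
  also have "\<dots> = g [^] (c * j + kap x * - (c * j))" by (rule gp_mult)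
  also have "c * j + kap x * - (c * j) = c * j * (1 - kap x)" by (simp add: algebra_simps)
  finally have cmu: "cm G u x = g [^] (c * j * (1 - kap x))" .
  have "cm G (h \<otimes> u) x = cj G h (cm G u x) \<otimes> cm G h x" using h u x by (rule cm_mult_left)
  also have "cj G h (cm G u x) = g [^] (kap h * (c * j * (1 - kap x)))" unfolding cmu using h by (rule cj_gp)
  also have "g [^] (kap h * (c * j * (1 - kap x))) = g [^] (3 * j)"
  proof -
    have "kap h * (c * j * (1 - kap x)) = (kap h * c * (1 - kap x)) * j" by (simp add: algebra_simps)
    then have "(kap h * (c * j * (1 - kap x))) mod 21 = (((kap h * c * (1 - kap x)) mod 21) * j) mod 21"
      by (simp only: mod_mult_left_eq)
    also have "\<dots> = (3 * j) mod 21" by (simp only: c)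
    finally show ?thesis by (simp only: gp_eq)
  qed
  finally show ?thesis using h u by blast
qed

definition T :: "'a \<Rightarrow> 'a set" where "T x = {cm G h x | h. h \<in> carrier G}"

lemma T_D: "x \<in> carrier G \<Longrightarrow> T x \<subseteq> D"
  unfolding T_def using cm_in_derived by blast

lemma A_T: assumes x: "x \<in> carrier G" and kx: "kap x \<noteq> 1" shows "A \<subseteq> T x"
proof
  fix a assume "a \<in> A"
  then obtain j :: int where j: "a = g [^] (3 * j)" by blast
  obtain h' where h': "h' \<in> carrier G" "cm G h' x = g [^] (3 * j) \<otimes> cm G \<one> x"
    using shift[OF x kx one_closed] by blast
  have "cm G h' x = a" using h' j x by (simp add: cm_one_left)
  then show "a \<in> T x" unfolding T_def using h' by blast
qed

lemma card_A: "card A = 7"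
proof -
  have E: "A = (\<lambda>j::int. g [^] (3 * j)) ` {0..<7}"
  proof
    show "A \<subseteq> (\<lambda>j::int. g [^] (3 * j)) ` {0..<7}"
    proof
      fix a assume "a \<in> A"
      then obtain t :: int where t: "a = g [^] (3 * t)" by blast
      have "(3 * t) mod 21 = (3 * (t mod 7)) mod 21" by (simp only: mod21_l3 mod_mod_trivial)
      then have "a = g [^] (3 * (t mod 7))" by (simp only: gp_eq t)
      moreover have "t mod 7 \<in> {0..<7}" by simp
      ultimately show "a \<in> (\<lambda>j::int. g [^] (3 * j)) ` {0..<7}" by (rule image_eqI)
    qed
    show "(\<lambda>j::int. g [^] (3 * j)) ` {0..<7} \<subseteq> A" by blast
  qed
  have "inj_on (\<lambda>j::int. g [^] (3 * j)) {0..<7}"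
  proof (rule inj_onI)
    fix a b :: int assume a: "a \<in> {0..<7}" and b: "b \<in> {0..<7}" and e: "g [^] (3 * a) = g [^] (3 * b)"
    have "(3 * a) mod 21 = (3 * b) mod 21" using e by (simp only: gp_eq)
    then have "3 * (a mod 7) = 3 * (b mod 7)" by (simp only: mod21_l3)
    moreover have "a mod 7 = a" "b mod 7 = b" using a b by simp_all
    ultimately show "a = b" by simp
  qed
  then have "card ((\<lambda>j::int. g [^] (3 * j)) ` {0..<7}) = card {0..<7::int}" by (rule card_image)
  then show ?thesis unfolding E by simp
qed

lemma card_D: "card D = 21"
proof -
  have E: "D = (\<lambda>j::int. g [^] j) ` {0..<21}"
  proof
    show "D \<subseteq> (\<lambda>j::int. g [^] j) ` {0..<21}"
    proof
      fix a assume "a \<in> D"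
      then obtain t :: int where t: "a = g [^] t" using inD by blast
      then have "a = g [^] (t mod 21)" by (simp only: gp_mod)
      moreover have "t mod 21 \<in> {0..<21}" by simp
      ultimately show "a \<in> (\<lambda>j::int. g [^] j) ` {0..<21}" by (rule image_eqI)
    qed
    show "(\<lambda>j::int. g [^] j) ` {0..<21} \<subseteq> D" by auto
  qed
  have "inj_on (\<lambda>j::int. g [^] j) {0..<21}"
  proof (rule inj_onI)
    fix a b :: int assume a: "a \<in> {0..<21}" and b: "b \<in> {0..<21}" and e: "g [^] a = g [^] b"
    have "a mod 21 = b mod 21" using e by (simp only: gp_eq)
    moreover have "a mod 21 = a" "b mod 21 = b" using a b by simp_all
    ultimately show "a = b" by simp
  qed
  then have "card ((\<lambda>j::int. g [^] j) ` {0..<21}) = card {0..<21::int}" by (rule card_image)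
  then show ?thesis unfolding E by simp
qed

definition Zh :: "'a set" where "Zh = {x \<in> carrier G. \<forall>h\<in>carrier G. cm G h x \<in> A}"

lemma card7: assumes x: "x \<in> Zh" and kx: "kap x \<noteq> 1" shows "card (conj_class G x) = 7"
proof -
  have xc: "x \<in> carrier G" using x unfolding Zh_def by simp
  have "T x \<subseteq> A" using x unfolding Zh_def T_def by blast
  then have "T x = A" using A_T[OF xc kx] by blast
  then show ?thesis using card_conj_class[OF xc] card_A unfolding T_def by simp
qed

lemma card21: assumes x: "x \<in> carrier G" and kx: "kap x \<noteq> 1" and nz: "x \<notin> Zh"
  shows "card (conj_class G x) = 21"
proof -
  obtain h1 where h1: "h1 \<in> carrier G" "cm G h1 x \<notin> A" using nz x unfolding Zh_def by blast
  obtain s :: int where s: "cm G h1 x = g [^] s" using cm_gp[OF h1(1) x] by blast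
  have ns: "\<not> 3 dvd s" using h1(2) s memA by simp
  have kh1: "kap h1 = 1 \<or> kap h1 = 4 \<or> kap h1 = 16" using kap_in[OF h1(1)] by auto
  have "\<exists>m::int. kap h1 = 3 * m + 1"
  proof -
    from kh1 consider "kap h1 = 1" | "kap h1 = 4" | "kap h1 = 16" by blast
    then show ?thesis
    proof cases
      case 1 then show ?thesis by (intro exI[of _ 0]) simp
    next
      case 2 then show ?thesis by (intro exI[of _ 1]) simp
    next
      case 3 then show ?thesis by (intro exI[of _ 5]) simp
    qed
  qed
  then obtain m :: int where m: "kap h1 = 3 * m + 1" by blast
  have hh: "h1 \<otimes> h1 \<in> carrier G" using h1 by simp
  have s2: "cm G (h1 \<otimes> h1) x = g [^] (kap h1 * s + s)"
  proof -
    have "cm G (h1 \<otimes> h1) x = cj G h1 (cm G h1 x) \<otimes> cm G h1 x" using h1 x by (simp add: cm_mult_left)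
    also have "\<dots> = g [^] (kap h1 * s) \<otimes> g [^] s" using h1 by (simp add: s cj_gp)
    finally show ?thesis by (simp add: gp_mult)
  qed
  have "D \<subseteq> T x"
  proof
    fix d assume "d \<in> D"
    then obtain i :: int where i: "d = g [^] i" using inD by blast
    have "3 dvd i \<or> 3 dvd (i - s) \<or> 3 dvd (i - 2*s)" using ns by presburger
    moreover
    { assume "3 dvd i"
      then obtain j where j: "i = 3 * j" by blast
      obtain h' where h': "h' \<in> carrier G" "cm G h' x = g [^] (3 * j) \<otimes> cm G \<one> x"
        using shift[OF x kx one_closed] by blast
      then have "cm G h' x = d" using i j x by (simp add: cm_one_left)
      then have "d \<in> T x" unfolding T_def using h' by blast }
    moreover
    { assume "3 dvd (i - s)"
      then obtain j where j: "i - s = 3 * j" by blast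
      obtain h' where h': "h' \<in> carrier G" "cm G h' x = g [^] (3 * j) \<otimes> cm G h1 x"
        using shift[OF x kx h1(1)] by blast
      then have "cm G h' x = g [^] (3 * j + s)" using s by (simp add: gp_mult)
      also have "3 * j + s = i" using j by simp
      finally have "cm G h' x = d" using i by simp
      then have "d \<in> T x" unfolding T_def using h' by blast }
    moreover
    { assume "3 dvd (i - 2*s)"
      then obtain j where j: "i - 2*s = 3 * j" by blast
      obtain h' where h': "h' \<in> carrier G" "cm G h' x = g [^] (3 * (j - m * s)) \<otimes> cm G (h1 \<otimes> h1) x"
        using shift[OF x kx hh] by blast
      then have "cm G h' x = g [^] (3 * (j - m * s) + (kap h1 * s + s))" using s2 by (simp add: gp_mult)
      also have "3 * (j - m * s) + (kap h1 * s + s) = i"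
      proof -
        have "3 * (j - m * s) + (kap h1 * s + s) = 3 * j + 2 * s" unfolding m by (simp add: algebra_simps)
        then show ?thesis using j by simp
      qed
      finally have "cm G h' x = d" using i by simp
      then have "d \<in> T x" unfolding T_def using h' by blast }
    ultimately show "d \<in> T x" by blast
  qed
  then have "T x = D" using T_D[OF x] by blast
  then show ?thesis using card_conj_class[OF x] card_D unfolding T_def by simp
qed


lemma Zh_carr: "x \<in> Zh \<Longrightarrow> x \<in> carrier G" unfolding Zh_def by simp

lemma one_Zh: "\<one> \<in> Zh"
  unfolding Zh_def using one_A by (simp add: cm_def)

lemma Zh_mult: assumes x: "x \<in> Zh" and y: "y \<in> Zh" shows "x \<otimes> y \<in> Zh"
proof -
  have xc: "x \<in> carrier G" and yc: "y \<in> carrier G" using x y Zh_carr by auto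
  have "cm G h (x \<otimes> y) \<in> A" if h: "h \<in> carrier G" for h
  proof -
    have "cm G h (x \<otimes> y) = cm G h x \<otimes> cj G x (cm G h y)" using h xc yc by (rule cm_mult_right)
    moreover have "cm G h x \<in> A" "cm G h y \<in> A" using x y h unfolding Zh_def by auto
    ultimately show ?thesis using cj_A[OF xc] A_mult by simp
  qed
  then show ?thesis using xc yc unfolding Zh_def by simp
qed

lemma Zh_inv: assumes p: "p \<in> Zh" shows "inv p \<in> Zh"
proof -
  have pc: "p \<in> carrier G" using p Zh_carr by auto
  have "cm G h (inv p) \<in> A" if h: "h \<in> carrier G" for h
  proof -
    have "cm G h (inv p) = cj G (inv p) (inv (cm G h p))" using h pc by (rule cm_inv_right)
    moreover have "cm G h p \<in> A" using p h unfolding Zh_def by auto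
    ultimately show ?thesis using cj_A[OF inv_closed[OF pc]] A_inv by simp
  qed
  then show ?thesis using pc unfolding Zh_def by simp
qed

lemma ZhC_center: assumes h0: "h0 \<in> carrier G" "kap h0 \<noteq> 1" and y: "y \<in> Zh" "y \<in> C" and c: "c \<in> C"
  shows "y \<otimes> c = c \<otimes> y"
proof -
  have yc: "y \<in> carrier G" and cc: "c \<in> carrier G" using y c C_carr Zh_carr by auto
  have "cm G c y \<in> A" using y cc unfolding Zh_def by auto
  then obtain t :: int where wt: "cm G c y = g [^] (3 * t)" by blast
  define e1 where "e1 = cm G h0 c"
  define e2 where "e2 = cm G h0 y"
  have e1D: "e1 \<in> D" and e2D: "e2 \<in> D" unfolding e1_def e2_def using cm_in_derived h0 cc yc by auto
  have e1c: "e1 \<in> carrier G" and e2c: "e2 \<in> carrier G" using e1D e2D D_carr by auto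
  have cjc: "cj G h0 c = e1 \<otimes> c" unfolding e1_def by (rule cj_eq[OF h0(1) cc])
  have cjy: "cj G h0 y = e2 \<otimes> y" unfolding e2_def by (rule cj_eq[OF h0(1) yc])
  have "cj G h0 (cm G c y) = cm G (e1 \<otimes> c) (e2 \<otimes> y)" using cj_cm[OF h0(1) cc yc] cjc cjy by simp
  also have "\<dots> = cm G c (e2 \<otimes> y)"
  proof -
    have ey: "e2 \<otimes> y \<in> carrier G" using e2c yc by simp
    have "cm G (e1 \<otimes> c) (e2 \<otimes> y) = cj G e1 (cm G c (e2 \<otimes> y)) \<otimes> cm G e1 (e2 \<otimes> y)"
      using e1c cc ey by (rule cm_mult_left)
    moreover have "cm G e1 (e2 \<otimes> y) = \<one>"
    proof -
      have "e1 \<otimes> (e2 \<otimes> y) = (e1 \<otimes> e2) \<otimes> y" using e1c e2c yc by (simp add: m_assoc)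
      also have "\<dots> = (e2 \<otimes> e1) \<otimes> y" using D_comm[OF e1D e2D] by simp
      also have "\<dots> = e2 \<otimes> (e1 \<otimes> y)" using e1c e2c yc by (simp add: m_assoc)
      also have "e1 \<otimes> y = y \<otimes> e1" using C_comm[OF y(2) e1D] by simp
      also have "e2 \<otimes> (y \<otimes> e1) = (e2 \<otimes> y) \<otimes> e1" using e1c e2c yc by (simp add: m_assoc)
      finally show ?thesis using cm_comm[OF e1c ey] by simp
    qed
    moreover have "cj G e1 (cm G c (e2 \<otimes> y)) = cm G c (e2 \<otimes> y)"
    proof -
      have "cm G c (e2 \<otimes> y) \<in> D" using cm_in_derived cc ey by simp
      then show ?thesis using cj_comm[OF e1c] D_comm[OF e1D] cc ey by simp
    qed
    ultimately show ?thesis using cc ey by simp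
  qed
  also have "\<dots> = cm G c y"
  proof -
    have "cm G c (e2 \<otimes> y) = cm G c e2 \<otimes> cj G e2 (cm G c y)" using cc e2c yc by (rule cm_mult_right)
    moreover have "cm G c e2 = \<one>" using cm_comm[OF cc e2c] C_comm[OF c e2D] by simp
    moreover have "cj G e2 (cm G c y) = cm G c y"
    proof -
      have "cm G c y \<in> D" using cm_in_derived cc yc by simp
      then show ?thesis using cj_comm[OF e2c] D_comm[OF e2D] cc yc by simp
    qed
    ultimately show ?thesis using cc yc by simp
  qed
  finally have fix1: "cj G h0 (g [^] (3 * t)) = g [^] (3 * t)" unfolding wt .
  then have "g [^] (kap h0 * (3 * t)) = g [^] (3 * t)" using h0 by (simp add: cj_gp)
  then have "(kap h0 * (3 * t)) mod 21 = (3 * t) mod 21" by (simp only: gp_eq)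
  moreover have "kap h0 = 4 \<or> kap h0 = 16" using kap_in[OF h0(1)] h0(2) by auto
  ultimately have "7 dvd 3 * t" using mod21_7 by blast
  then have "7 dvd t" by (rule seven_dvd)
  then have "21 dvd 3 * t" by auto
  then have "cm G c y = \<one>" using wt gp_one by simp
  then show ?thesis using cm_comm[OF cc yc] by simp
qed

lemma center_C: "center (G\<lparr>carrier := C\<rparr>) = {z \<in> C. \<forall>c\<in>C. z \<otimes> c = c \<otimes> z}"
  by (simp add: center_def)

lemma kap_three: assumes x0: "x0 \<in> carrier G" "kap x0 \<noteq> 1" and h: "h \<in> carrier G"
  shows "kap h = kap \<one> \<or> kap h = kap x0 \<or> kap h = kap (x0 \<otimes> x0)"
proof -
  have k0: "kap x0 = 4 \<or> kap x0 = 16" using kap_in[OF x0(1)] x0(2) by auto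
  have k2: "kap (x0 \<otimes> x0) = (kap x0 * kap x0) mod 21" using x0 kap_mult by simp
  show ?thesis using kap_in[OF h] k0 k2 kap_one by auto
qed

lemma Zh_C_eq: assumes x0: "x0 \<in> Zh" "kap x0 \<noteq> 1"
  shows "Zh \<inter> C = center (G\<lparr>carrier := C\<rparr>)"
proof
  have x0c: "x0 \<in> carrier G" using x0 Zh_carr by auto
  show "Zh \<inter> C \<subseteq> center (G\<lparr>carrier := C\<rparr>)"
    unfolding center_C using ZhC_center[OF x0c x0(2)] by blast
  show "center (G\<lparr>carrier := C\<rparr>) \<subseteq> Zh \<inter> C"
  proof
    fix z assume "z \<in> center (G\<lparr>carrier := C\<rparr>)"
    then have zC: "z \<in> C" and zcomm: "\<And>c. c \<in> C \<Longrightarrow> z \<otimes> c = c \<otimes> z" unfolding center_C by auto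
    have zc: "z \<in> carrier G" using zC C_carr by auto
    have "cm G h z \<in> A" if h: "h \<in> carrier G" for h
    proof -
      have ex: "\<exists>p. p \<in> Zh \<and> kap p = kap h"
      proof -
        have "kap h = kap \<one> \<or> kap h = kap x0 \<or> kap h = kap (x0 \<otimes> x0)" by (rule kap_three[OF x0c x0(2) h])
        then consider "kap h = kap \<one>" | "kap h = kap x0" | "kap h = kap (x0 \<otimes> x0)" by blast
        then show ?thesis
        proof cases
          case 1 then show ?thesis using one_Zh by (intro exI[of _ "\<one>"]) simp
        next
          case 2 then show ?thesis using x0 by (intro exI[of _ x0]) simp
        next
          case 3 then show ?thesis using x0 Zh_mult by (intro exI[of _ "x0 \<otimes> x0"]) simp
        qed
      qed
      then obtain p where p: "p \<in> Zh" "kap p = kap h" by blast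
      have pc: "p \<in> carrier G" using p Zh_carr by auto
      define c where "c = h \<otimes> inv p"
      have cC: "c \<in> C" unfolding c_def using kap_eq_C[OF h pc] p by simp
      have cc: "c \<in> carrier G" using cC C_carr by auto
      have hcp: "h = c \<otimes> p" unfolding c_def using h pc by (simp add: m_assoc)
      have "cm G h z = cj G c (cm G p z) \<otimes> cm G c z" unfolding hcp using cc pc zc by (rule cm_mult_left)
      moreover have "cm G c z = \<one>" using cm_comm[OF cc zc] zcomm[OF cC] by simp
      moreover have a: "cm G p z \<in> A"
      proof -
        have "cm G p z = inv (cm G z p)" using pc zc by (rule cm_swap)
        moreover have "cm G z p \<in> A" using p zc unfolding Zh_def by auto
        ultimately show ?thesis using A_inv by simp
      qed
      moreover have "cj G c (cm G p z) = cm G p z"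
        using cj_comm[OF cc] C_comm[OF cC A_D[OF a]] A_carr[OF a] by simp
      ultimately show ?thesis using a A_carr[OF a] by simp
    qed
    then show "z \<in> Zh \<inter> C" using zc zC unfolding Zh_def by simp
  qed
qed

lemma S_img: assumes p: "p \<in> Zh"
  shows "{z \<in> Zh. kap z = kap p} = (\<lambda>y. y \<otimes> p) ` (Zh \<inter> C)"
proof
  have pc: "p \<in> carrier G" using p Zh_carr by auto
  show "{z \<in> Zh. kap z = kap p} \<subseteq> (\<lambda>y. y \<otimes> p) ` (Zh \<inter> C)"
  proof
    fix z assume z: "z \<in> {z \<in> Zh. kap z = kap p}"
    then have zc: "z \<in> carrier G" using Zh_carr by auto
    have "z \<otimes> inv p \<in> C" using kap_eq_C[OF zc pc] z by simp
    moreover have "z \<otimes> inv p \<in> Zh" using Zh_mult Zh_inv p z by simp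
    moreover have "z = (z \<otimes> inv p) \<otimes> p" using zc pc by (simp add: m_assoc)
    ultimately show "z \<in> (\<lambda>y. y \<otimes> p) ` (Zh \<inter> C)" by blast
  qed
  show "(\<lambda>y. y \<otimes> p) ` (Zh \<inter> C) \<subseteq> {z \<in> Zh. kap z = kap p}"
  proof
    fix z assume "z \<in> (\<lambda>y. y \<otimes> p) ` (Zh \<inter> C)"
    then obtain y where y: "y \<in> Zh" "y \<in> C" "z = y \<otimes> p" by blast
    have yc: "y \<in> carrier G" using y Zh_carr by auto
    have "kap z = (kap y * kap p) mod 21" using y(3) kap_mult[OF yc pc] by simp
    also have "\<dots> = kap p" using memC y(2) kap_in[OF pc] by auto
    finally show "z \<in> {z \<in> Zh. kap z = kap p}" using y Zh_mult p by simp
  qed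
qed

lemma card_S: assumes p: "p \<in> Zh" shows "card {z \<in> Zh. kap z = kap p} = card (Zh \<inter> C)"
proof -
  have pc: "p \<in> carrier G" using p Zh_carr by auto
  have "inj_on (\<lambda>y. y \<otimes> p) (carrier G)" using pc by (auto intro!: inj_onI)
  moreover have "Zh \<inter> C \<subseteq> carrier G" using Zh_carr by auto
  ultimately have "inj_on (\<lambda>y. y \<otimes> p) (Zh \<inter> C)" by (rule inj_on_subset)
  then show ?thesis unfolding S_img[OF p] by (rule card_image)
qed

lemma count: assumes x0: "x0 \<in> Zh" "kap x0 \<noteq> 1" shows "card (Zh - C) = 2 * card (Zh \<inter> C)"
proof -
  have x0c: "x0 \<in> carrier G" using x0 Zh_carr by auto
  have xx: "x0 \<otimes> x0 \<in> Zh" using Zh_mult x0 by simp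
  have k0: "kap x0 = 4 \<or> kap x0 = 16" using kap_in[OF x0c] x0(2) by auto
  have k2: "kap (x0 \<otimes> x0) = (kap x0 * kap x0) mod 21" using x0c kap_mult by simp
  have E: "Zh - C = {z \<in> Zh. kap z = kap x0} \<union> {z \<in> Zh. kap z = kap (x0 \<otimes> x0)}"
  proof
    show "Zh - C \<subseteq> {z \<in> Zh. kap z = kap x0} \<union> {z \<in> Zh. kap z = kap (x0 \<otimes> x0)}"
    proof
      fix z assume z: "z \<in> Zh - C"
      then have zc: "z \<in> carrier G" using Zh_carr by auto
      have "kap z \<noteq> 1" using z zc memC by auto
      then have "kap z = kap x0 \<or> kap z = kap (x0 \<otimes> x0)" using kap_in[OF zc] k0 k2 by auto
      then show "z \<in> {z \<in> Zh. kap z = kap x0} \<union> {z \<in> Zh. kap z = kap (x0 \<otimes> x0)}" using z by auto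
    qed
    show "{z \<in> Zh. kap z = kap x0} \<union> {z \<in> Zh. kap z = kap (x0 \<otimes> x0)} \<subseteq> Zh - C"
      using memC k0 k2 by auto
  qed
  have fin: "finite Zh" by (rule finite_subset[OF _ fin]) (use Zh_carr in blast)
  have disj: "{z \<in> Zh. kap z = kap x0} \<inter> {z \<in> Zh. kap z = kap (x0 \<otimes> x0)} = {}"
    using k0 k2 by auto
  have "card (Zh - C) = card {z \<in> Zh. kap z = kap x0} + card {z \<in> Zh. kap z = kap (x0 \<otimes> x0)}"
    unfolding E by (rule card_Un_disjoint) (use fin disj in auto)
  also have "\<dots> = 2 * card (Zh \<inter> C)" using card_S[OF x0(1)] card_S[OF xx] by simp
  finally show ?thesis .
qed

lemma part2:
  "card (rcosets C) = 3 \<and> card (D \<inter> center G) = 3 \<and>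
   ((\<forall>x \<in> carrier G - C. card (conj_class G x) = 21)
     \<noteq> (\<exists>S. S \<subseteq> carrier G - C
            \<and> card S = 2 * card (center (G\<lparr>carrier := C\<rparr>))
            \<and> (\<forall>x \<in> S. card (conj_class G x) = 7)
            \<and> (\<forall>x \<in> carrier G - (C \<union> S). card (conj_class G x) = 21)))"
proof (intro conjI)
  show "card (rcosets C) = 3" by (rule card_rcosets)
  show "card (D \<inter> center G) = 3" by (rule card_D_center)
  show "(\<forall>x \<in> carrier G - C. card (conj_class G x) = 21)
     \<noteq> (\<exists>S. S \<subseteq> carrier G - C
            \<and> card S = 2 * card (center (G\<lparr>carrier := C\<rparr>))
            \<and> (\<forall>x \<in> S. card (conj_class G x) = 7)
            \<and> (\<forall>x \<in> carrier G - (C \<union> S). card (conj_class G x) = 21))"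
  proof (cases "Zh \<subseteq> C")
    case True
    have L: "\<forall>x \<in> carrier G - C. card (conj_class G x) = 21"
    proof
      fix x assume x: "x \<in> carrier G - C"
      then have "kap x \<noteq> 1" "x \<notin> Zh" using memC True by auto
      then show "card (conj_class G x) = 21" using card21 x by auto
    qed
    have R: "\<not> (\<exists>S. S \<subseteq> carrier G - C
            \<and> card S = 2 * card (center (G\<lparr>carrier := C\<rparr>))
            \<and> (\<forall>x \<in> S. card (conj_class G x) = 7)
            \<and> (\<forall>x \<in> carrier G - (C \<union> S). card (conj_class G x) = 21))"
    proof
      assume "\<exists>S. S \<subseteq> carrier G - C
            \<and> card S = 2 * card (center (G\<lparr>carrier := C\<rparr>))
            \<and> (\<forall>x \<in> S. card (conj_class G x) = 7)
            \<and> (\<forall>x \<in> carrier G - (C \<union> S). card (conj_class G x) = 21)"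
      then obtain S where S: "S \<subseteq> carrier G - C" "card S = 2 * card (center (G\<lparr>carrier := C\<rparr>))"
        "\<forall>x \<in> S. card (conj_class G x) = 7" by blast
      have "\<one> \<in> center (G\<lparr>carrier := C\<rparr>)" unfolding center_C using memC kap_one C_carr by auto
      moreover have "finite (center (G\<lparr>carrier := C\<rparr>))" unfolding center_C
        by (rule finite_subset[OF _ fin]) (use C_carr in blast)
      ultimately have "card (center (G\<lparr>carrier := C\<rparr>)) \<noteq> 0" by auto
      then have "S \<noteq> {}" using S(2) by auto
      then obtain x where x: "x \<in> S" by blast
      then have xc: "x \<in> carrier G - C" using S(1) by auto
      then have "kap x \<noteq> 1" "x \<notin> Zh" using memC True by auto
      then have "card (conj_class G x) = 21" using card21 xc by auto
      moreover have "card (conj_class G x) = 7" using S(3) x by auto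
      ultimately show False by simp
    qed
    show ?thesis using L R by blast
  next
    case False
    then obtain x0 where x0: "x0 \<in> Zh" "x0 \<notin> C" by blast
    have x0c: "x0 \<in> carrier G" using x0 Zh_carr by auto
    have k0: "kap x0 \<noteq> 1" using x0 x0c memC by auto
    have c7: "card (conj_class G x0) = 7" by (rule card7[OF x0(1) k0])
    have L: "\<not> (\<forall>x \<in> carrier G - C. card (conj_class G x) = 21)"
    proof
      assume "\<forall>x \<in> carrier G - C. card (conj_class G x) = 21"
      then have "card (conj_class G x0) = 21" using x0c x0(2) by blast
      then show False using c7 by simp
    qed
    have R: "\<exists>S. S \<subseteq> carrier G - C
            \<and> card S = 2 * card (center (G\<lparr>carrier := C\<rparr>))
            \<and> (\<forall>x \<in> S. card (conj_class G x) = 7)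
            \<and> (\<forall>x \<in> carrier G - (C \<union> S). card (conj_class G x) = 21)"
    proof (intro exI conjI)
      show "Zh - C \<subseteq> carrier G - C" using Zh_carr by auto
      show "card (Zh - C) = 2 * card (center (G\<lparr>carrier := C\<rparr>))"
        using count[OF x0(1) k0] Zh_C_eq[OF x0(1) k0] by simp
      show "\<forall>x \<in> Zh - C. card (conj_class G x) = 7"
      proof
        fix x assume x: "x \<in> Zh - C"
        then have "kap x \<noteq> 1" using memC Zh_carr by auto
        then show "card (conj_class G x) = 7" using card7 x by auto
      qed
      show "\<forall>x \<in> carrier G - (C \<union> (Zh - C)). card (conj_class G x) = 21"
      proof
        fix x assume x: "x \<in> carrier G - (C \<union> (Zh - C))"
        then have "kap x \<noteq> 1" "x \<notin> Zh" using memC by auto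
        then show "card (conj_class G x) = 21" using card21 x by auto
      qed
    qed
    show ?thesis using L R by blast
  qed
qed

end

lemma (in group) part1:
  assumes fin: "finite (carrier G)" and oddG: "odd (order G)"
  and iso: "G\<lparr>carrier := derived G (carrier G)\<rparr> \<cong> integer_mod_group 15"
  shows "derived G (carrier G) \<subseteq> center G"
proof -
  have Dsub: "subgroup (derived G (carrier G)) G" by (rule derived_is_subgroup) simp
  obtain g where gD: "g \<in> derived G (carrier G)" and gr: "derived G (carrier G) = range (\<lambda>i::int. g [^] i)"
    and go: "\<forall>i j::int. g [^] i = g [^] j \<longleftrightarrow> i mod int 15 = j mod int 15"
    using cyc_gen[OF Dsub iso] by auto
  have go': "\<forall>i j::int. g [^] i = g [^] j \<longleftrightarrow> i mod 15 = j mod 15" using go by simp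
  have gc: "g \<in> carrier G" using gD derived_in_carrier[of "carrier G"] by auto
  have gcomm: "cj G h g = g" if h: "h \<in> carrier G" for h
  proof -
    obtain a :: int where a: "cm G h g = g [^] a" using cm_in_derived[OF h gc] gr by auto
    have "cj G h g = g [^] a \<otimes> g [^] (1::int)" using cj_eq[OF h gc] a gc by simp
    also have "\<dots> = g [^] (a + 1)" using gc by (simp add: int_pow_mult)
    finally have k: "cj G h g = g [^] (a + 1)" .
    have "(a + 1) ^ order G mod 15 = 1 mod 15" by (rule conj_exp_order[OF h gc k go'])
    then have "(a + 1) ^ order G mod 15 = 1" by simp
    then have "(a + 1) mod 15 = 1" by (rule nt15[OF oddG])
    then have "g [^] (a + 1) = g [^] (1::int)" using go' by simp
    then show ?thesis using k gc by simp
  qed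
  show ?thesis
  proof
    fix d assume d: "d \<in> derived G (carrier G)"
    then obtain i :: int where i: "d = g [^] i" using gr by auto
    have "d \<otimes> h = h \<otimes> d" if h: "h \<in> carrier G" for h
    proof -
      have "cj G h d = d" using i h gc gcomm[OF h] by (simp add: cj_int_pow)
      then show ?thesis using cj_one_iff[OF h] i gc by simp
    qed
    then show "d \<in> center G" unfolding center_def using i gc by simp
  qed
qed


theorem lemma4p1:
  fixes G :: "('a, 'b) monoid_scheme"
  assumes "group G" and "finite (carrier G)" and "odd (order G)"
  shows "(G\<lparr>carrier := commutator_subgroup G\<rparr> \<cong> integer_mod_group 15
            \<longrightarrow> commutator_subgroup G \<subseteq> center G)
       \<and> ((G\<lparr>carrier := commutator_subgroup G\<rparr> \<cong> integer_mod_group 21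
            \<and> \<not> commutator_subgroup G \<subseteq> center G)
          \<longrightarrow> (let C = centralizer G (commutator_subgroup G) in
                card (rcosets\<^bsub>G\<^esub> C) = 3
              \<and> card (commutator_subgroup G \<inter> center G) = 3
              \<and> ((\<forall>x \<in> carrier G - C. card (conj_class G x) = 21)
                 \<noteq> (\<exists>S. S \<subseteq> carrier G - C
                        \<and> card S = 2 * card (center (G\<lparr>carrier := C\<rparr>))
                        \<and> (\<forall>x \<in> S. card (conj_class G x) = 7)
                        \<and> (\<forall>x \<in> carrier G - (C \<union> S). card (conj_class G x) = 21)))))"
proof -
  interpret group G by (rule assms(1))
  have Dsub: "subgroup (derived G (carrier G)) G" by (rule derived_is_subgroup) simp
  show ?thesis
  proof (intro conjI impI)
    assume iso15: "G\<lparr>carrier := commutator_subgroup G\<rparr> \<cong> integer_mod_group 15"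
    show "commutator_subgroup G \<subseteq> center G" by (rule part1[OF assms(2,3) iso15])
  next
    assume H: "G\<lparr>carrier := commutator_subgroup G\<rparr> \<cong> integer_mod_group 21
            \<and> \<not> commutator_subgroup G \<subseteq> center G"
    obtain g where gD: "g \<in> derived G (carrier G)" and gr: "derived G (carrier G) = range (\<lambda>i::int. g [^]\<^bsub>G\<^esub> i)"
      and go: "\<forall>i j::int. g [^]\<^bsub>G\<^esub> i = g [^]\<^bsub>G\<^esub> j \<longleftrightarrow> i mod int 21 = j mod int 21"
      using cyc_gen[OF Dsub conjunct1[OF H]] by auto
    have go': "\<forall>i j::int. g [^]\<^bsub>G\<^esub> i = g [^]\<^bsub>G\<^esub> j \<longleftrightarrow> i mod 21 = j mod 21" using go by simp
    have gc: "g \<in> carrier G" using gD derived_in_carrier[of "carrier G"] by auto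
    have "P21 G g"
      unfolding P21_def P21_axioms_def using assms(1,2,3) gr go' gc conjunct2[OF H] by blast
    then interpret P: P21 G g .
    show "let C = centralizer G (commutator_subgroup G) in
                card (rcosets\<^bsub>G\<^esub> C) = 3
              \<and> card (commutator_subgroup G \<inter> center G) = 3
              \<and> ((\<forall>x \<in> carrier G - C. card (conj_class G x) = 21)
                 \<noteq> (\<exists>S. S \<subseteq> carrier G - C
                        \<and> card S = 2 * card (center (G\<lparr>carrier := C\<rparr>))
                        \<and> (\<forall>x \<in> S. card (conj_class G x) = 7)
                        \<and> (\<forall>x \<in> carrier G - (C \<union> S). card (conj_class G x) = 21)))"
      unfolding Let_def by (rule P.part2)
  qed
qed

end
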